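(* If $(A_m)_{m=0}^\infty$ is an Appell sequence, then the expected value of the Wronskian Appell polynomials over partitions of $n$ with respect to Plancherel measure is \[ \mathbb{E}(A_\lambda:\lambda\vdash n)=\sum_{\lambda\vdash n}\frac{F_\lambda^2}{n!}A_\lambda = A_1^n. \]
   Context: An Appell sequence is a sequence of polynomials $(A_m)_{m\ge0}$ with $A_0=1$ and $A_m'=mA_{m-1}$ for $m\ge1$. For a partition $\lambda$ of length $r$, let $(n_1,\dots,n_r)=(\lambda_r,\lambda_{r-1}+1,\dots,\lambda_1+r-1)$ and $A_\lambda=\operatorname{Wr}[A_{n_1},\dots,A_{n_r}]/\Delta(n_1,\dots,n_r)$, where $\operatorname{Wr}$ is the Wronskian and $\Delta$ the Vandermonde determinant $\prod_{i<j}(x_j-x_i)$. $F_\lambda$ is the number of standard Young tableaux of shape $\lambda$, and Plancherel measure on partitions of $n$ assigns probability $F_\lambda^2/n!$ to $\lambda\vdash n$. *)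

theory Defs
  imports "HOL-Computational_Algebra.Polynomial" "Jordan_Normal_Form.Determinant"
begin

definition appell :: "(nat \<Rightarrow> 'a::field_char_0 poly) \<Rightarrow> bool" where
  "appell A \<longleftrightarrow> A 0 = 1 \<and> (\<forall>m\<ge>1. pderiv (A m) = smult (of_nat m) (A (m - 1)))"

definition is_partition :: "nat list \<Rightarrow> bool" where
  "is_partition lam \<longleftrightarrow> sorted_wrt (\<ge>) lam \<and> (\<forall>x\<in>set lam. 0 < x)"

definition partitions :: "nat \<Rightarrow> nat list set" where
  "partitions n = {lam. is_partition lam \<and> sum_list lam = n}"

definition young_cells :: "nat list \<Rightarrow> (nat \<times> nat) set" where
  "young_cells lam = {(i, j). i < length lam \<and> j < lam ! i}"

definition syt :: "nat list \<Rightarrow> (nat \<times> nat \<Rightarrow> nat) set" where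
  "syt lam = {T. bij_betw T (young_cells lam) {1..sum_list lam}
      \<and> (\<forall>i j i' j'. (i, j) \<in> young_cells lam \<and> (i', j') \<in> young_cells lam
            \<and> i \<le> i' \<and> j \<le> j' \<longrightarrow> T (i, j) \<le> T (i', j'))
      \<and> (\<forall>c. c \<notin> young_cells lam \<longrightarrow> T c = 0)}"

definition num_syt :: "nat list \<Rightarrow> nat" where
  "num_syt lam = card (syt lam)"

definition degree_seq :: "nat list \<Rightarrow> nat list" where
  "degree_seq lam = map (\<lambda>i. lam ! (length lam - 1 - i) + i) [0..<length lam]"

definition wronskian :: "'a::field_char_0 poly list \<Rightarrow> 'a poly" where
  "wronskian fs = det (mat (length fs) (length fs) (\<lambda>(i, j). (pderiv ^^ i) (fs ! j)))"

definition vandermonde :: "nat list \<Rightarrow> int" where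
  "vandermonde xs = (\<Prod>(i, j)\<in>{(i, j). i < j \<and> j < length xs}. int (xs ! j) - int (xs ! i))"

definition wronskian_appell :: "(nat \<Rightarrow> 'a::field_char_0 poly) \<Rightarrow> nat list \<Rightarrow> 'a poly" where
  "wronskian_appell A lam =
     smult (inverse (of_int (vandermonde (degree_seq lam))))
           (wronskian (map A (degree_seq lam)))"

end

theory Submission
  imports Defs
begin


lemma det_mat_leibniz:
  "det (mat n n f) = (\<Sum>p\<in>{p. p permutes {0..<n}}. signof p * (\<Prod>i=0..<n. f (i, p i)))"
proof -
  have "det (mat n n f) = (\<Sum>p\<in>{p. p permutes {0..<n}}. signof p * (\<Prod>i=0..<n. mat n n f $$ (i, p i)))"
    by (rule det_def') simp
  also have "\<dots> = (\<Sum>p\<in>{p. p permutes {0..<n}}. signof p * (\<Prod>i=0..<n. f (i, p i)))"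
  proof (rule sum.cong[OF refl])
    fix p assume "p \<in> {p. p permutes {0..<n}}"
    hence p: "p permutes {0..<n}" by simp
    have "(\<Prod>i=0..<n. mat n n f $$ (i, p i)) = (\<Prod>i=0..<n. f (i, p i))"
      by (rule prod.cong[OF refl]) (use p permutes_in_image[OF p] in auto)
    thus "signof p * (\<Prod>i=0..<n. mat n n f $$ (i, p i)) = signof p * (\<Prod>i=0..<n. f (i, p i))" by simp
  qed
  finally show ?thesis .
qed

lemma row_replace_sum:
  "(\<Sum>t=0..<n. det (mat n n (\<lambda>(i,j). if i = t then g (i,j) else f (i,j))))
   = (\<Sum>p\<in>{p. p permutes {0..<n}}. signof p *
        (\<Sum>t=0..<n. \<Prod>i=0..<n. if i = t then g (i, p i) else f (i, p i)))"
proof -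
  have "(\<Sum>t=0..<n. det (mat n n (\<lambda>(i,j). if i = t then g (i,j) else f (i,j))))
     = (\<Sum>t=0..<n. \<Sum>p\<in>{p. p permutes {0..<n}}. signof p * (\<Prod>i=0..<n. if i = t then g (i, p i) else f (i, p i)))"
    by (simp add: det_mat_leibniz)
  also have "\<dots> = (\<Sum>p\<in>{p. p permutes {0..<n}}. \<Sum>t=0..<n. signof p * (\<Prod>i=0..<n. if i = t then g (i, p i) else f (i, p i)))"
    by (rule sum.swap)
  also have "\<dots> = (\<Sum>p\<in>{p. p permutes {0..<n}}. signof p *
        (\<Sum>t=0..<n. \<Prod>i=0..<n. if i = t then g (i, p i) else f (i, p i)))"
    by (simp add: sum_distrib_left)
  finally show ?thesis .
qed

lemma col_replace_sum:
  "(\<Sum>t=0..<n. det (mat n n (\<lambda>(i,j). if j = t then g (i,j) else f (i,j))))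
   = (\<Sum>p\<in>{p. p permutes {0..<n}}. signof p *
        (\<Sum>t=0..<n. \<Prod>i=0..<n. if i = t then g (i, p i) else f (i, p i)))"
proof -
  have "(\<Sum>t=0..<n. det (mat n n (\<lambda>(i,j). if j = t then g (i,j) else f (i,j))))
     = (\<Sum>t=0..<n. \<Sum>p\<in>{p. p permutes {0..<n}}. signof p * (\<Prod>i=0..<n. if p i = t then g (i, p i) else f (i, p i)))"
    by (simp add: det_mat_leibniz)
  also have "\<dots> = (\<Sum>p\<in>{p. p permutes {0..<n}}. \<Sum>t=0..<n. signof p * (\<Prod>i=0..<n. if p i = t then g (i, p i) else f (i, p i)))"
    by (rule sum.swap)
  also have "\<dots> = (\<Sum>p\<in>{p. p permutes {0..<n}}. signof p *
        (\<Sum>t=0..<n. \<Prod>i=0..<n. if i = t then g (i, p i) else f (i, p i)))"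
  proof (rule sum.cong[OF refl])
    fix p assume "p \<in> {p. p permutes {0..<n}}"
    hence p: "p permutes {0..<n}" by simp
    have "(\<Sum>t=0..<n. (\<Prod>i=0..<n. if p i = t then g (i, p i) else f (i, p i)))
        = (\<Sum>s\<in>{0..<n}. (\<Prod>i=0..<n. if p i = p s then g (i, p i) else f (i, p i)))"
      using sum.reindex[of p "{0..<n}" "\<lambda>t. (\<Prod>i=0..<n. if p i = t then g (i, p i) else f (i, p i))"]
        permutes_image[OF p] permutes_inj_on[OF p] by simp
    also have "\<dots> = (\<Sum>s\<in>{0..<n}. (\<Prod>i=0..<n. if i = s then g (i, p i) else f (i, p i)))"
      by (rule sum.cong[OF refl], rule prod.cong[OF refl]) (use permutes_inj[OF p] in \<open>auto simp: inj_eq\<close>)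
    finally have eq: "(\<Sum>t=0..<n. (\<Prod>i=0..<n. if p i = t then g (i, p i) else f (i, p i)))
        = (\<Sum>s\<in>{0..<n}. (\<Prod>i=0..<n. if i = s then g (i, p i) else f (i, p i)))" .
    show "(\<Sum>t=0..<n. signof p * (\<Prod>i=0..<n. if p i = t then g (i, p i) else f (i, p i)))
        = signof p * (\<Sum>t=0..<n. \<Prod>i=0..<n. if i = t then g (i, p i) else f (i, p i))"
      by (simp only: sum_distrib_left[symmetric] eq)
  qed
  finally show ?thesis .
qed

lemma row_col_replace:
  "(\<Sum>t=0..<n. det (mat n n (\<lambda>(i,j). if i = t then g (i,j) else f (i,j))))
 = (\<Sum>t=0..<n. det (mat n n (\<lambda>(i,j). if j = t then g (i,j) else f (i,j))))"
  unfolding row_replace_sum col_replace_sum ..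

lemma prod_if_single:
  assumes "finite S" "t \<in> S"
  shows "(\<Prod>i\<in>S. if i = t then a * F i else F i) = a * (\<Prod>i\<in>S. F i)"
proof -
  have "(\<Prod>i\<in>S. if i = t then a * F i else F i) = (\<Prod>i\<in>S. (if i = t then a else 1) * F i)"
    by (rule prod.cong) auto
  also have "\<dots> = (\<Prod>i\<in>S. (if i = t then a else 1)) * (\<Prod>i\<in>S. F i)" by (rule prod.distrib)
  also have "(\<Prod>i\<in>S. (if i = t then a else 1)) = a" using assms by (simp add: prod.delta)
  finally show ?thesis .
qed

lemma row_scaled_replace:
  fixes f :: "nat \<times> nat \<Rightarrow> 'a::comm_ring_1"
  shows "(\<Sum>t=0..<n. det (mat n n (\<lambda>(i,j). if i = t then (x i - y j) * f (i,j) else f (i,j))))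
   = ((\<Sum>i=0..<n. x i) - (\<Sum>j=0..<n. y j)) * det (mat n n f)"
proof -
  have "(\<Sum>t=0..<n. det (mat n n (\<lambda>(i,j). if i = t then (x i - y j) * f (i,j) else f (i,j))))
     = (\<Sum>p\<in>{p. p permutes {0..<n}}. signof p *
        (\<Sum>t=0..<n. \<Prod>i=0..<n. if i = t then (x i - y (p i)) * f (i, p i) else f (i, p i)))"
    using row_replace_sum[of n "\<lambda>ij. (x (fst ij) - y (snd ij)) * f ij" f] unfolding fst_conv snd_conv .
  also have "\<dots> = (\<Sum>p\<in>{p. p permutes {0..<n}}. ((\<Sum>i=0..<n. x i) - (\<Sum>j=0..<n. y j)) * (signof p * (\<Prod>i=0..<n. f (i, p i))))"
  proof (rule sum.cong[OF refl])
    fix p assume "p \<in> {p. p permutes {0..<n}}"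
    hence p: "p permutes {0..<n}" by simp
    have "(\<Sum>t=0..<n. \<Prod>i=0..<n. if i = t then (x i - y (p i)) * f (i, p i) else f (i, p i))
       = (\<Sum>t=0..<n. (x t - y (p t)) * (\<Prod>i=0..<n. f (i, p i)))"
      by (rule sum.cong[OF refl]) (subst prod_if_single[symmetric], auto intro: prod.cong)
    also have "\<dots> = ((\<Sum>t=0..<n. x t) - (\<Sum>t=0..<n. y (p t))) * (\<Prod>i=0..<n. f (i, p i))"
      by (simp only: sum_distrib_right[symmetric] sum_subtractf)
    also have "(\<Sum>t=0..<n. y (p t)) = (\<Sum>j=0..<n. y j)"
      using sum.reindex[of p "{0..<n}" y] permutes_image[OF p] permutes_inj_on[OF p] by simp
    finally have eq: "(\<Sum>t=0..<n. \<Prod>i=0..<n. if i = t then (x i - y (p i)) * f (i, p i) else f (i, p i))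
       = ((\<Sum>i=0..<n. x i) - (\<Sum>j=0..<n. y j)) * (\<Prod>i=0..<n. f (i, p i))" .
    show "signof p * (\<Sum>t=0..<n. \<Prod>i=0..<n. if i = t then (x i - y (p i)) * f (i, p i) else f (i, p i))
       = ((\<Sum>i=0..<n. x i) - (\<Sum>j=0..<n. y j)) * (signof p * (\<Prod>i=0..<n. f (i, p i)))"
      unfolding eq by (simp only: mult_ac)
  qed
  also have "\<dots> = ((\<Sum>i=0..<n. x i) - (\<Sum>j=0..<n. y j)) * det (mat n n f)"
    by (simp add: det_mat_leibniz sum_distrib_left)
  finally show ?thesis .
qed

lemma det_rowscale:
  fixes f :: "nat \<times> nat \<Rightarrow> 'a::comm_ring_1"
  shows "det (mat n n (\<lambda>(i,j). c i * f (i,j))) = (\<Prod>i=0..<n. c i) * det (mat n n f)"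
  by (simp add: det_mat_leibniz sum_distrib_left prod.distrib algebra_simps)

lemma det_row0:
  fixes A :: "'a::comm_ring_1 mat"
  assumes A: "A \<in> carrier_mat n n" and n: "0 < n"
    and r: "\<And>j. j < n \<Longrightarrow> A $$ (0,j) = (if j = 0 then c else 0)"
  shows "det A = c * det (mat_delete A 0 0)"
proof -
  have "det A = (\<Sum>j<n. A $$ (0,j) * cofactor A 0 j)" by (rule laplace_expansion_row[OF A n])
  also have "\<dots> = (\<Sum>j<n. if j = 0 then c * cofactor A 0 j else 0)"
    by (rule sum.cong) (auto simp: r)
  also have "\<dots> = c * cofactor A 0 0" using n by (simp add: sum.delta)
  finally show ?thesis by (simp add: cofactor_def)
qed

lemma mat_delete_00:
  "mat_delete (mat (Suc n) (Suc n) f) 0 0 = mat n n (\<lambda>(i,j). f (Suc i, Suc j))"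
  by (rule eq_matI) (auto simp: mat_delete_def)


definition ffr :: "'a::comm_ring_1 \<Rightarrow> nat \<Rightarrow> 'a" where
  "ffr x j = (\<Prod>t<j. x - of_nat t)"

lemma ffr_0[simp]: "ffr x 0 = 1" by (simp add: ffr_def)
lemma ffr_Suc: "ffr x (Suc j) = ffr x j * (x - of_nat j)" by (simp add: ffr_def)

definition vpairs :: "nat \<Rightarrow> (nat \<times> nat) set" where
  "vpairs r = {(i, k). i < k \<and> k < r}"

lemma finite_vpairs[simp]: "finite (vpairs r)"
  by (rule finite_subset[of _ "{..<r} \<times> {..<r}"]) (auto simp: vpairs_def)

lemma vpairs_Suc:
  "vpairs (Suc r) = (\<lambda>k. (0, Suc k)) ` {..<r} \<union> (\<lambda>(i,k). (Suc i, Suc k)) ` vpairs r"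
proof (rule Set.set_eqI)
  fix z :: "nat \<times> nat"
  obtain i k where z: "z = (i,k)" by (cases z)
  show "z \<in> vpairs (Suc r) \<longleftrightarrow> z \<in> (\<lambda>k. (0, Suc k)) ` {..<r} \<union> (\<lambda>(i,k). (Suc i, Suc k)) ` vpairs r"
  proof
    assume "z \<in> vpairs (Suc r)"
    hence ik: "i < k" "k < Suc r" by (auto simp: vpairs_def z)
    then obtain k' where k': "k = Suc k'" by (cases k) auto
    show "z \<in> (\<lambda>k. (0, Suc k)) ` {..<r} \<union> (\<lambda>(i,k). (Suc i, Suc k)) ` vpairs r"
    proof (cases i)
      case 0 thus ?thesis using ik k' z by auto
    next
      case (Suc i')
      hence "(i', k') \<in> vpairs r" using ik k' by (auto simp: vpairs_def)
      thus ?thesis using Suc k' z by force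
    qed
  next
    assume "z \<in> (\<lambda>k. (0, Suc k)) ` {..<r} \<union> (\<lambda>(i,k). (Suc i, Suc k)) ` vpairs r"
    thus "z \<in> vpairs (Suc r)" by (auto simp: vpairs_def)
  qed
qed

lemma prod_vpairs_Suc:
  "(\<Prod>(i,k)\<in>vpairs (Suc r). F i k) = (\<Prod>k<r. F 0 (Suc k)) * (\<Prod>(i,k)\<in>vpairs r. F (Suc i) (Suc k))"
proof -
  have disj: "(\<lambda>k. (0::nat, Suc k)) ` {..<r} \<inter> (\<lambda>(i,k). (Suc i, Suc k)) ` vpairs r = {}" by auto
  have inj1: "inj_on (\<lambda>k. (0::nat, Suc k)) {..<r}" by (auto simp: inj_on_def)
  have inj2: "inj_on (\<lambda>(i,k). (Suc i, Suc k)) (vpairs r)" by (auto simp: inj_on_def)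
  have "(\<Prod>(i,k)\<in>vpairs (Suc r). F i k)
      = (\<Prod>z\<in>(\<lambda>k. (0, Suc k)) ` {..<r}. case z of (i,k) \<Rightarrow> F i k) *
        (\<Prod>z\<in>(\<lambda>(i,k). (Suc i, Suc k)) ` vpairs r. case z of (i,k) \<Rightarrow> F i k)"
    unfolding vpairs_Suc by (rule prod.union_disjoint) (use disj in auto)
  also have "(\<Prod>z\<in>(\<lambda>k. (0, Suc k)) ` {..<r}. case z of (i,k) \<Rightarrow> F i k) = (\<Prod>k<r. F 0 (Suc k))"
    by (subst prod.reindex[OF inj1]) simp
  also have "(\<Prod>z\<in>(\<lambda>(i,k). (Suc i, Suc k)) ` vpairs r. case z of (i,k) \<Rightarrow> F i k)
      = (\<Prod>(i,k)\<in>vpairs r. F (Suc i) (Suc k))"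
    by (subst prod.reindex[OF inj2]) (simp add: case_prod_beta)
  finally show ?thesis .
qed

lemma vdm_ffr:
  fixes x :: "nat \<Rightarrow> 'a::comm_ring_1"
  shows "det (mat r r (\<lambda>(i,j). ffr (x i) j)) = (\<Prod>(i,k)\<in>vpairs r. x k - x i)"
proof (induction r arbitrary: x)
  case 0
  have "vpairs 0 = {}" by (auto simp: vpairs_def)
  thus ?case by (simp add: det_mat_leibniz)
next
  case (Suc r)
  define M where "M = mat (Suc r) (Suc r) (\<lambda>(i,j). ffr (x i) j)"
  define U :: "'a mat" where "U = mat (Suc r) (Suc r) (\<lambda>(p,q). if p = q then 1 else if Suc p = q then -(x 0 - of_nat p) else 0)"
  have M: "M \<in> carrier_mat (Suc r) (Suc r)" and U: "U \<in> carrier_mat (Suc r) (Suc r)"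
    by (auto simp: M_def U_def)
  have "det U = 1"
  proof -
    have "upper_triangular U" by (auto simp: upper_triangular_def U_def)
    hence "det U = prod_list (diag_mat U)" using det_upper_triangular U by blast
    also have "\<dots> = 1" by (simp add: prod_list_diag_prod U_def)
    finally show ?thesis .
  qed
  have MU: "M * U = mat (Suc r) (Suc r) (\<lambda>(i,j). if j = 0 then 1 else (x i - x 0) * ffr (x i) (j - 1))"
  proof (rule eq_matI)
    fix i j assume i: "i < dim_row (mat (Suc r) (Suc r) (\<lambda>(i,j). if j = 0 then 1 else (x i - x 0) * ffr (x i) (j - 1)))"
      and j: "j < dim_col (mat (Suc r) (Suc r) (\<lambda>(i,j). if j = 0 then 1 else (x i - x 0) * ffr (x i) (j - 1)))"
    hence i: "i < Suc r" and j: "j < Suc r" by auto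
    have "(M * U) $$ (i,j) = (\<Sum>p = 0..<Suc r. M $$ (i,p) * U $$ (p,j))"
      using i j M U by (simp add: scalar_prod_def)
    also have "\<dots> = (\<Sum>p = 0..<Suc r. (if p = j then ffr (x i) p else 0) +
                   (if Suc p = j then - ffr (x i) p * (x 0 - of_nat p) else 0))"
      by (rule sum.cong[OF refl]) (use i j in \<open>auto simp: M_def U_def ring_distribs\<close>)
    also have "\<dots> = ffr (x i) j + (if j = 0 then 0 else - ffr (x i) (j - 1) * (x 0 - of_nat (j - 1)))"
    proof -
      have "(\<Sum>p = 0..<Suc r. (if Suc p = j then - ffr (x i) p * (x 0 - of_nat p) else 0))
          = (if j = 0 then 0 else - ffr (x i) (j - 1) * (x 0 - of_nat (j - 1)))"
      proof (cases j)
        case 0 thus ?thesis by simp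
      next
        case (Suc j')
        have "(\<Sum>p = 0..<Suc r. (if Suc p = j then - ffr (x i) p * (x 0 - of_nat p) else 0))
            = (\<Sum>p = 0..<Suc r. (if p = j' then - ffr (x i) p * (x 0 - of_nat p) else 0))"
          using Suc by (intro sum.cong) auto
        also have "\<dots> = - ffr (x i) j' * (x 0 - of_nat j')" using Suc j by (simp add: sum.delta)
        finally show ?thesis using Suc by simp
      qed
      thus ?thesis using j by (simp add: sum.distrib sum.delta)
    qed
    also have "\<dots> = (if j = 0 then 1 else (x i - x 0) * ffr (x i) (j - 1))"
    proof (cases j)
      case (Suc j') thus ?thesis by (simp add: ffr_Suc algebra_simps)
    qed simp
    finally show "(M * U) $$ (i,j) = mat (Suc r) (Suc r) (\<lambda>(i,j). if j = 0 then 1 else (x i - x 0) * ffr (x i) (j - 1)) $$ (i,j)"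
      using i j by simp
  qed (auto simp: M_def U_def)
  have "det M = det (M * U)" using det_mult[OF M U] \<open>det U = 1\<close> by simp
  also have "\<dots> = 1 * det (mat_delete (M * U) 0 0)"
    by (rule det_row0[of _ "Suc r"]) (auto simp: MU)
  also have "mat_delete (M * U) 0 0 = mat r r (\<lambda>(i,j). (x (Suc i) - x 0) * ffr (x (Suc i)) j)"
    unfolding MU mat_delete_00 by simp
  also have "det \<dots> = (\<Prod>i=0..<r. x (Suc i) - x 0) * det (mat r r (\<lambda>(i,j). ffr (x (Suc i)) j))"
    using det_rowscale[of r "\<lambda>i. x (Suc i) - x 0" "\<lambda>(i,j). ffr (x (Suc i)) j"] by (simp add: case_prod_beta)
  also have "det (mat r r (\<lambda>(i,j). ffr (x (Suc i)) j)) = (\<Prod>(i,k)\<in>vpairs r. x (Suc k) - x (Suc i))"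
    using Suc.IH[of "\<lambda>i. x (Suc i)"] by simp
  finally show ?case unfolding M_def by (simp add: prod_vpairs_Suc atLeast0LessThan)
qed


definition hh :: "(nat \<Rightarrow> 'a::comm_ring_1) \<Rightarrow> nat \<Rightarrow> nat \<Rightarrow> 'a" where
  "hh h m j = (if j \<le> m then h (m - j) else 0)"

definition JTf :: "(nat \<Rightarrow> 'a::comm_ring_1) \<Rightarrow> nat \<Rightarrow> (nat \<Rightarrow> nat) \<Rightarrow> 'a" where
  "JTf h N b = det (mat N N (\<lambda>(i,j). hh h (b i) j))"

lemma JTf_cong:
  assumes "\<And>i. i < N \<Longrightarrow> b i = b' i"
  shows "JTf h N b = JTf h N b'"
proof -
  have "mat N N (\<lambda>(i,j). hh h (b i) j) = mat N N (\<lambda>(i,j). hh h (b' i) j)"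
    by (rule eq_matI) (auto simp: assms)
  thus ?thesis by (simp add: JTf_def)
qed

lemma JTf_shift:
  assumes h0: "h 0 = 1" and b0: "b' 0 = 0" and bs: "\<And>i. i < N \<Longrightarrow> b' (Suc i) = Suc (b i)"
  shows "JTf h (Suc N) b' = JTf h N b"
proof -
  have "JTf h (Suc N) b' = 1 * det (mat_delete (mat (Suc N) (Suc N) (\<lambda>(i,j). hh h (b' i) j)) 0 0)"
    unfolding JTf_def by (rule det_row0[of _ "Suc N"]) (auto simp: hh_def b0 h0)
  also have "mat_delete (mat (Suc N) (Suc N) (\<lambda>(i,j). hh h (b' i) j)) 0 0 = mat N N (\<lambda>(i,j). hh h (b i) j)"
    unfolding mat_delete_00 by (rule eq_matI) (auto simp: bs hh_def)
  finally show ?thesis by (simp add: JTf_def)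
qed

lemma JTf_id:
  assumes h0: "h 0 = 1"
  shows "JTf h N (\<lambda>i. i) = 1"
proof -
  have "det (mat N N (\<lambda>(i,j). hh h i j)) = prod_list (diag_mat (mat N N (\<lambda>(i,j). hh h i j)))"
    by (rule det_lower_triangular[of N]) (auto simp: hh_def)
  also have "\<dots> = 1" by (simp add: prod_list_diag_prod hh_def h0)
  finally show ?thesis by (simp add: JTf_def)
qed

lemma JTf_eq_rows:
  assumes "i < N" "i' < N" "i \<noteq> i'" "b i = b i'"
  shows "JTf h N b = 0"
  unfolding JTf_def
  by (rule det_identical_rows[of _ N i i']) (use assms in \<open>auto simp: row_def\<close>)

lemma JTf_zero_row:
  assumes "t < N" "\<And>j. j < N \<Longrightarrow> f t j = 0"
  shows "det (mat N N (\<lambda>(i,j). f i j)) = (0::'a::comm_ring_1)"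
proof -
  have "\<And>p. p permutes {0..<N} \<Longrightarrow> (\<Prod>i=0..<N. f i (p i)) = 0"
  proof -
    fix p assume p: "p permutes {0..<N}"
    have "p t < N" using permutes_in_image[OF p] assms(1) by simp
    hence "f t (p t) = 0" using assms(2) by simp
    thus "(\<Prod>i=0..<N. f i (p i)) = 0" using assms(1) by (intro prod_zero) auto
  qed
  thus ?thesis by (simp add: det_mat_leibniz)
qed

lemma pieri_JTf:
  assumes h0: "h 0 = 1" and b0: "b 0 = 0" and N: "0 < N"
  shows "h 1 * JTf h N b = (\<Sum>t=0..<N. JTf h N (b(t := Suc (b t))))"
proof -
  obtain N' where N': "N = Suc N'" using N by (cases N) auto
  let ?f = "\<lambda>ij::nat\<times>nat. hh h (b (fst ij)) (snd ij)"
  let ?g = "\<lambda>ij::nat\<times>nat. hh h (Suc (b (fst ij))) (snd ij)"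
  have "(\<Sum>t=0..<N. JTf h N (b(t := Suc (b t))))
      = (\<Sum>t=0..<N. det (mat N N (\<lambda>(i,j). if i = t then ?g (i,j) else ?f (i,j))))"
    unfolding JTf_def by (intro sum.cong refl arg_cong[where f=det] eq_matI) auto
  also have "\<dots> = (\<Sum>t=0..<N. det (mat N N (\<lambda>(i,j). if j = t then ?g (i,j) else ?f (i,j))))"
    by (rule row_col_replace)
  also have "\<dots> = (\<Sum>t=0..<N. if t = 0 then det (mat N N (\<lambda>(i,j). if j = 0 then ?g (i,j) else ?f (i,j))) else 0)"
  proof (rule sum.cong[OF refl])
    fix t assume t: "t \<in> {0..<N}"
    show "det (mat N N (\<lambda>(i,j). if j = t then ?g (i,j) else ?f (i,j))) =
      (if t = 0 then det (mat N N (\<lambda>(i,j). if j = 0 then ?g (i,j) else ?f (i,j))) else 0)"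
    proof (cases "t = 0")
      case False
      show ?thesis using False
        by (simp, intro det_identical_columns[of _ N t "t - 1"]) (use t False in \<open>auto simp: col_def hh_def intro!: eq_vecI\<close>)
    qed simp
  qed
  also have "\<dots> = det (mat N N (\<lambda>(i,j). if j = 0 then ?g (i,j) else ?f (i,j)))"
    using N by (simp add: sum.delta)
  also have "\<dots> = h 1 * det (mat_delete (mat N N (\<lambda>(i,j). if j = 0 then ?g (i,j) else ?f (i,j))) 0 0)"
    by (rule det_row0[of _ N]) (use N in \<open>auto simp: hh_def b0\<close>)
  also have "mat_delete (mat N N (\<lambda>(i,j). if j = 0 then ?g (i,j) else ?f (i,j))) 0 0
      = mat_delete (mat N N (\<lambda>(i,j). hh h (b i) j)) 0 0"
    unfolding N' mat_delete_00 by (rule eq_matI) auto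
  also have "det \<dots> = JTf h N b"
  proof -
    have "JTf h N b = 1 * det (mat_delete (mat N N (\<lambda>(i,j). hh h (b i) j)) 0 0)"
      unfolding JTf_def by (rule det_row0[of _ N]) (use N in \<open>auto simp: hh_def b0 h0\<close>)
    thus ?thesis by simp
  qed
  finally show ?thesis by (rule sym)
qed


definition Par :: "nat \<Rightarrow> nat \<Rightarrow> nat list set" where
  "Par N n = {lam. length lam = N \<and> sorted_wrt (\<ge>) lam \<and> sum_list lam = n}"

definition addb :: "nat \<Rightarrow> nat list \<Rightarrow> nat list" where
  "addb k lam = lam[k := Suc (lam ! k)]"

definition subb :: "nat \<Rightarrow> nat list \<Rightarrow> nat list" where
  "subb k lam = lam[k := lam ! k - 1]"

lemma dec_adj: "sorted_wrt (\<ge>) (xs::nat list) \<longleftrightarrow> (\<forall>i. Suc i < length xs \<longrightarrow> xs ! Suc i \<le> xs ! i)"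
  by (subst sorted_wrt_iff_nth_Suc_transp) (auto simp: transp_def)

lemma dec_nth: "sorted_wrt (\<ge>) (xs::nat list) \<Longrightarrow> i \<le> j \<Longrightarrow> j < length xs \<Longrightarrow> xs ! j \<le> xs ! i"
  by (cases "i = j") (auto simp: sorted_wrt_iff_nth_less)

lemma finite_Par: "finite (Par N n)"
proof (rule finite_subset)
  show "Par N n \<subseteq> {xs. set xs \<subseteq> {..n} \<and> length xs = N}"
    by (auto simp: Par_def member_le_sum_list)
  show "finite {xs. set xs \<subseteq> {..n} \<and> length xs = N}"
    by (rule finite_lists_length_eq) simp
qed

lemma Par_0: "Par N 0 = {replicate N 0}"
proof (rule Set.set_eqI)
  fix xs show "xs \<in> Par N 0 \<longleftrightarrow> xs \<in> {replicate N 0}"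
  proof
    assume "xs \<in> Par N 0"
    hence "length xs = N" "\<forall>x\<in>set xs. x = 0" by (auto simp: Par_def)
    thus "xs \<in> {replicate N 0}" using replicate_length_same[of xs 0] by simp
  qed (auto simp: Par_def sorted_wrt_iff_nth_less)
qed

lemma addb_Par:
  assumes mu: "mu \<in> Par N n" and k: "k < N" and c: "k = 0 \<or> mu ! k < mu ! (k - 1)"
  shows "addb k mu \<in> Par N (Suc n)"
proof -
  have len: "length mu = N" and s: "sorted_wrt (\<ge>) mu" and sm: "sum_list mu = n"
    using mu by (auto simp: Par_def)
  have "sorted_wrt (\<ge>) (addb k mu)"
    unfolding dec_adj
  proof (intro allI impI)
    fix i assume i: "Suc i < length (addb k mu)"
    hence i': "Suc i < N" by (simp add: addb_def len)
    have a: "mu ! Suc i \<le> mu ! i" using s i' len by (simp add: dec_adj)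
    show "addb k mu ! Suc i \<le> addb k mu ! i"
      using a c i' len k by (auto simp: addb_def nth_list_update)
  qed
  moreover have "sum_list (addb k mu) = Suc n"
    using sm k len by (simp add: addb_def sum_list_update)
  ultimately show ?thesis using len by (simp add: Par_def addb_def)
qed

lemma addb_notPar:
  assumes mu: "mu \<in> Par N n" and k: "k < N" and na: "addb k mu \<notin> Par N (Suc n)"
  shows "0 < k \<and> mu ! (k - 1) = mu ! k"
proof -
  have "\<not> (k = 0 \<or> mu ! k < mu ! (k - 1))" using addb_Par[OF mu k] na by blast
  moreover have "k > 0 \<Longrightarrow> mu ! k \<le> mu ! (k - 1)" using mu k by (intro dec_nth) (auto simp: Par_def)
  ultimately show ?thesis by auto
qed

lemma subb_Par:
  assumes la: "la \<in> Par N n" and k: "k < N" and p: "0 < la ! k"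
    and c: "Suc k = N \<or> la ! Suc k < la ! k"
  shows "subb k la \<in> Par N (n - 1)"
proof -
  have len: "length la = N" and s: "sorted_wrt (\<ge>) la" and sm: "sum_list la = n"
    using la by (auto simp: Par_def)
  have "sorted_wrt (\<ge>) (subb k la)"
    unfolding dec_adj
  proof (intro allI impI)
    fix i assume i: "Suc i < length (subb k la)"
    hence i': "Suc i < N" by (simp add: subb_def len)
    have a: "la ! Suc i \<le> la ! i" using s i' len by (simp add: dec_adj)
    show "subb k la ! Suc i \<le> subb k la ! i"
      using a c i' len k by (auto simp: subb_def nth_list_update)
  qed
  moreover have "sum_list (subb k la) = n - 1"
  proof -
    have "la ! k \<le> n" using sm k len elem_le_sum_list by metis
    thus ?thesis using sm k len p by (simp add: subb_def sum_list_update)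
  qed
  ultimately show ?thesis using len by (simp add: Par_def subb_def)
qed

lemma subb_notPar:
  assumes la: "la \<in> Par N n" and k: "k < N" and p: "0 < la ! k" and ns: "subb k la \<notin> Par N (n - 1)"
  shows "Suc k < N \<and> la ! Suc k = la ! k"
proof -
  have "\<not> (Suc k = N \<or> la ! Suc k < la ! k)" using subb_Par[OF la k p] ns by blast
  moreover have "Suc k < N \<Longrightarrow> la ! Suc k \<le> la ! k" using la by (intro dec_nth) (auto simp: Par_def)
  ultimately show ?thesis using k by auto
qed

lemma subb_addb[simp]: "k < length mu \<Longrightarrow> subb k (addb k mu) = mu"
  by (auto simp: subb_def addb_def)

lemma addb_subb: "k < length la \<Longrightarrow> 0 < la ! k \<Longrightarrow> addb k (subb k la) = la"
  by (auto simp: subb_def addb_def)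

lemma subb_Par_pos:
  assumes la: "la \<in> Par N (Suc n)" and k: "k < N" and s: "subb k la \<in> Par N n"
  shows "0 < la ! k"
proof (rule ccontr)
  assume "\<not> 0 < la ! k"
  hence "subb k la = la" by (simp add: subb_def) (metis list_update_id)
  thus False using la s by (simp add: Par_def)
qed

lemma Par_last_zero:
  assumes mu: "mu \<in> Par N n" and N: "n < N"
  shows "mu ! (N - 1) = 0"
proof (rule ccontr)
  assume a: "mu ! (N - 1) \<noteq> 0"
  have len: "length mu = N" and s: "sorted_wrt (\<ge>) mu" and sm: "sum_list mu = n"
    using mu by (auto simp: Par_def)
  have "\<And>i. i \<in> {0..<N} \<Longrightarrow> 1 \<le> mu ! i"
  proof -
    fix i assume "i \<in> {0..<N}"
    hence "mu ! (N - 1) \<le> mu ! i" using s len by (intro dec_nth) auto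
    thus "1 \<le> mu ! i" using a by simp
  qed
  hence "(\<Sum>i=0..<N. (1::nat)) \<le> (\<Sum>i=0..<N. mu ! i)" by (rule sum_mono)
  also have "\<dots> = n" using sm len by (simp add: sum_list_sum_nth)
  finally show False using N by simp
qed


lemma sytI:
  assumes "bij_betw T (young_cells lam) {1..sum_list lam}"
    and "\<And>i j i' j'. (i, j) \<in> young_cells lam \<Longrightarrow> (i', j') \<in> young_cells lam \<Longrightarrow> i \<le> i' \<Longrightarrow> j \<le> j' \<Longrightarrow> T (i, j) \<le> T (i', j')"
    and "\<And>c. c \<notin> young_cells lam \<Longrightarrow> T c = 0"
  shows "T \<in> syt lam"
  using assms unfolding syt_def by blast

lemma sytD:
  assumes "T \<in> syt lam"
  shows "bij_betw T (young_cells lam) {1..sum_list lam}"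
    and "\<And>i j i' j'. (i, j) \<in> young_cells lam \<Longrightarrow> (i', j') \<in> young_cells lam \<Longrightarrow> i \<le> i' \<Longrightarrow> j \<le> j' \<Longrightarrow> T (i, j) \<le> T (i', j')"
    and "\<And>c. c \<notin> young_cells lam \<Longrightarrow> T c = 0"
  using assms unfolding syt_def by blast+

lemma finite_young_cells: "finite (young_cells lam)"
proof (rule finite_subset)
  show "young_cells lam \<subseteq> {..<length lam} \<times> {..<sum_list lam}"
    unfolding young_cells_def using elem_le_sum_list by fastforce
qed auto

lemma finite_syt: "finite (syt lam)"
proof (rule finite_subset)
  show "syt lam \<subseteq> {f. \<forall>x. (x \<in> young_cells lam \<longrightarrow> f x \<in> {1..sum_list lam}) \<and> (x \<notin> young_cells lam \<longrightarrow> f x = 0)}"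
    using sytD by (fastforce dest: bij_betwE)
  show "finite {f. \<forall>x. (x \<in> young_cells lam \<longrightarrow> f x \<in> {1..sum_list lam}) \<and> (x \<notin> young_cells lam \<longrightarrow> f x = 0)}"
    by (rule finite_set_of_finite_funs) (auto simp: finite_young_cells)
qed

lemma young_cells_subb:
  assumes "k < length la" "0 < la ! k"
  shows "young_cells (subb k la) = young_cells la - {(k, la ! k - 1)}"
  using assms by (auto simp: young_cells_def subb_def nth_list_update split: if_splits)

lemma syt_rec:
  assumes la: "la \<in> Par N (Suc n)"
  shows "card (syt la) = (\<Sum>k\<in>{k. k < N \<and> subb k la \<in> Par N n}. card (syt (subb k la)))"
proof -
  define K where "K = {k. k < N \<and> subb k la \<in> Par N n}"
  define c where "c k = (k, la ! k - 1)" for k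
  define S where "S k = {T \<in> syt la. T (c k) = Suc n}" for k
  have len: "length la = N" and s: "sorted_wrt (\<ge>) la" and sm: "sum_list la = Suc n"
    using la by (auto simp: Par_def)
  have KN: "k \<in> K \<Longrightarrow> k < N" for k by (simp add: K_def)
  have Kpos: "k \<in> K \<Longrightarrow> 0 < la ! k" for k using subb_Par_pos[OF la] by (auto simp: K_def)
  have Kcorner: "Suc k = N \<or> la ! Suc k < la ! k" if k: "k \<in> K" for k
  proof (cases "Suc k < N")
    case True
    have ss: "sorted_wrt (\<ge>) (subb k la)" using k by (simp add: K_def Par_def)
    have "subb k la ! Suc k \<le> subb k la ! k" using ss True len by (intro dec_nth) (auto simp: subb_def)
    hence "la ! Suc k \<le> la ! k - 1" using True len by (simp add: subb_def nth_list_update)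
    thus ?thesis using Kpos[OF k] by (intro disjI2) linarith
  next
    case False thus ?thesis using KN[OF k] by simp
  qed
  have ck_cell: "c k \<in> young_cells la" if "k \<in> K" for k
    using Kpos[OF that] KN[OF that] len by (simp add: c_def young_cells_def)
  have corner_max: "(i', j') = c k"
    if k: "k \<in> K" and a: "(i', j') \<in> young_cells la" and ki: "k \<le> i'" and kj: "la ! k - 1 \<le> j'" for k i' j'
  proof (cases "i' = k")
    case True thus ?thesis using a kj by (auto simp: c_def young_cells_def)
  next
    case False
    hence "Suc k \<le> i'" using ki by simp
    moreover have "i' < N" using a len by (simp add: young_cells_def)
    ultimately have "la ! i' \<le> la ! Suc k" using s len by (intro dec_nth) auto
    moreover have "la ! Suc k < la ! k" using Kcorner[OF k] \<open>Suc k \<le> i'\<close> \<open>i' < N\<close> by auto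
    moreover have "j' < la ! i'" using a by (simp add: young_cells_def)
    ultimately show ?thesis using kj by simp
  qed
  have sk_cells: "young_cells (subb k la) = young_cells la - {c k}" if "k \<in> K" for k
    using young_cells_subb[of k la] Kpos[OF that] KN[OF that] len by (simp add: c_def)
  have sk_sum: "sum_list (subb k la) = n" if "k \<in> K" for k using that by (simp add: K_def Par_def)

  have cover: "syt la = (\<Union>k\<in>K. S k)"
  proof (rule Set.set_eqI, rule iffI)
    fix T assume T: "T \<in> syt la"
    have bij: "bij_betw T (young_cells la) {1..Suc n}" using sytD(1)[OF T] sm by simp
    have mono: "\<And>i j i' j'. (i, j) \<in> young_cells la \<Longrightarrow> (i', j') \<in> young_cells la \<Longrightarrow> i \<le> i' \<Longrightarrow> j \<le> j' \<Longrightarrow> T (i, j) \<le> T (i', j')"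
      using sytD(2)[OF T] by blast
    have inj: "inj_on T (young_cells la)" using bij by (simp add: bij_betw_def)
    have vals: "\<And>a. a \<in> young_cells la \<Longrightarrow> T a \<le> Suc n" using bij by (auto dest: bij_betwE)
    have "Suc n \<in> T ` young_cells la" using bij by (auto simp: bij_betw_def)
    then obtain k j where kj: "(k, j) \<in> young_cells la" and Tkj: "T (k, j) = Suc n" by auto
    have kN: "k < N" and jk: "j < la ! k" using kj len by (auto simp: young_cells_def)
    have j_eq: "j = la ! k - 1"
    proof (rule ccontr)
      assume "j \<noteq> la ! k - 1"
      hence c1: "(k, Suc j) \<in> young_cells la" using jk kN len by (auto simp: young_cells_def)
      have "T (k, j) \<le> T (k, Suc j)" using mono[OF kj c1] by simp
      hence "T (k, Suc j) = T (k, j)" using vals[OF c1] Tkj by simp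
      hence "(k, Suc j) = (k, j)" using inj c1 kj by (auto dest: inj_onD)
      thus False by simp
    qed
    have corner: "Suc k = N \<or> la ! Suc k < la ! k"
    proof (rule ccontr)
      assume "\<not> (Suc k = N \<or> la ! Suc k < la ! k)"
      hence sk: "Suc k < N" and le: "la ! k \<le> la ! Suc k" using kN by auto
      hence c1: "(Suc k, j) \<in> young_cells la" using jk len by (auto simp: young_cells_def)
      have "T (k, j) \<le> T (Suc k, j)" using mono[OF kj c1] by simp
      hence "T (Suc k, j) = T (k, j)" using vals[OF c1] Tkj by simp
      hence "(Suc k, j) = (k, j)" using inj c1 kj by (auto dest: inj_onD)
      thus False by simp
    qed
    have "subb k la \<in> Par N (Suc n - 1)" by (rule subb_Par[OF la kN]) (use jk corner in auto)
    hence "k \<in> K" using kN by (simp add: K_def)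
    moreover have "T \<in> S k" using T Tkj j_eq by (simp add: S_def c_def)
    ultimately show "T \<in> (\<Union>k\<in>K. S k)" by blast
  qed (auto simp: S_def)

  have disj: "\<forall>k\<in>K. \<forall>k'\<in>K. k \<noteq> k' \<longrightarrow> S k \<inter> S k' = {}"
  proof (intro ballI impI)
    fix k k' assume k: "k \<in> K" and k': "k' \<in> K" and ne: "k \<noteq> k'"
    show "S k \<inter> S k' = {}"
    proof (rule ccontr)
      assume "S k \<inter> S k' \<noteq> {}"
      then obtain T where T: "T \<in> syt la" "T (c k) = Suc n" "T (c k') = Suc n" by (auto simp: S_def)
      have "inj_on T (young_cells la)" using sytD(1)[OF T(1)] by (simp add: bij_betw_def)
      hence "c k = c k'" using T ck_cell[OF k] ck_cell[OF k'] inj_onD[of T "young_cells la" "c k" "c k'"] by simp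
      thus False using ne by (simp add: c_def)
    qed
  qed

  have cardS: "card (S k) = card (syt (subb k la))" if k: "k \<in> K" for k
  proof (rule bij_betw_same_card, rule bij_betw_byWitness[where f' = "\<lambda>T. T(c k := Suc n)"])
    show "\<forall>T\<in>S k. (T(c k := 0))(c k := Suc n) = T" by (auto simp: S_def)
    show "\<forall>T\<in>syt (subb k la). (T(c k := Suc n))(c k := 0) = T"
    proof
      fix T assume "T \<in> syt (subb k la)"
      hence "T (c k) = 0" using sytD(3) sk_cells[OF k] by auto
      thus "(T(c k := Suc n))(c k := 0) = T" by auto
    qed
    show "(\<lambda>T. T(c k := 0)) ` S k \<subseteq> syt (subb k la)"
    proof
      fix T' assume "T' \<in> (\<lambda>T. T(c k := 0)) ` S k"
      then obtain T where T: "T \<in> syt la" "T (c k) = Suc n" and T': "T' = T(c k := 0)" by (auto simp: S_def)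
      have bij: "bij_betw T (young_cells la) {1..Suc n}" using sytD(1)[OF T(1)] sm by simp
      have inj: "inj_on T (young_cells la)" using bij by (simp add: bij_betw_def)
      have "T ` (young_cells la - {c k}) = T ` young_cells la - T ` {c k}"
        by (rule inj_on_image_set_diff[OF inj]) (use ck_cell[OF k] in auto)
      also have "\<dots> = {1..n}" using bij T(2) by (auto simp: bij_betw_def)
      finally have "bij_betw T (young_cells la - {c k}) {1..n}"
        using inj by (simp add: bij_betw_def inj_on_diff)
      hence "bij_betw T' (young_cells (subb k la)) {1..sum_list (subb k la)}"
        unfolding sk_cells[OF k] sk_sum[OF k] by (rule bij_betw_cong[THEN iffD1, rotated]) (auto simp: T')
      moreover have "T' (i, j) \<le> T' (i', j')" if "(i, j) \<in> young_cells (subb k la)" "(i', j') \<in> young_cells (subb k la)" "i \<le> i'" "j \<le> j'" for i j i' j'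
        using that sytD(2)[OF T(1), of i j i' j'] unfolding sk_cells[OF k] T' by auto
      moreover have "T' x = 0" if "x \<notin> young_cells (subb k la)" for x
        using that sytD(3)[OF T(1), of x] unfolding sk_cells[OF k] T' by auto
      ultimately show "T' \<in> syt (subb k la)" by (rule sytI)
    qed
    show "(\<lambda>T. T(c k := Suc n)) ` syt (subb k la) \<subseteq> S k"
    proof
      fix T' assume "T' \<in> (\<lambda>T. T(c k := Suc n)) ` syt (subb k la)"
      then obtain T where T: "T \<in> syt (subb k la)" and T': "T' = T(c k := Suc n)" by auto
      have bij: "bij_betw T (young_cells la - {c k}) {1..n}"
        using sytD(1)[OF T] unfolding sk_cells[OF k] sk_sum[OF k] .
      hence bij': "bij_betw T' (young_cells la - {c k}) {1..n}"
        by (rule bij_betw_cong[THEN iffD1, rotated]) (auto simp: T')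
      have "bij_betw T' ((young_cells la - {c k}) \<union> {c k}) ({1..n} \<union> {T' (c k)})"
        by (rule notIn_Un_bij_betw[OF _ _ bij']) (auto simp: T')
      moreover have "(young_cells la - {c k}) \<union> {c k} = young_cells la" using ck_cell[OF k] by auto
      moreover have "{1..n} \<union> {T' (c k)} = {1..sum_list la}" using sm by (auto simp: T')
      ultimately have b: "bij_betw T' (young_cells la) {1..sum_list la}" by simp
      have vals: "T a \<le> n" if "a \<in> young_cells la - {c k}" for a using bij that by (auto dest: bij_betwE)
      have "T' (i, j) \<le> T' (i', j')" if a: "(i, j) \<in> young_cells la" and a': "(i', j') \<in> young_cells la" and ii: "i \<le> i'" and jj: "j \<le> j'" for i j i' j'
      proof (cases "(i', j') = c k")
        case True
        show ?thesis
        proof (cases "(i, j) = c k")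
          case False thus ?thesis using True vals[of "(i,j)"] a by (simp add: T')
        qed (use True in simp)
      next
        case False
        have "(i, j) \<noteq> c k"
        proof
          assume "(i, j) = c k"
          hence "k \<le> i'" "la ! k - 1 \<le> j'" using ii jj by (auto simp: c_def)
          hence "(i', j') = c k" using corner_max[OF k a'] by simp
          thus False using False by simp
        qed
        thus ?thesis using False sytD(2)[OF T, of i j i' j'] a a' ii jj unfolding sk_cells[OF k] T' by auto
      qed
      moreover have "T' x = 0" if "x \<notin> young_cells la" for x
        using that sytD(3)[OF T, of x] ck_cell[OF k] unfolding sk_cells[OF k] T' by auto
      ultimately have "T' \<in> syt la" using b by (intro sytI)
      thus "T' \<in> S k" by (simp add: S_def T')
    qed
  qed

  have "card (syt la) = card (\<Union>k\<in>K. S k)" using cover by simp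
  also have "\<dots> = (\<Sum>k\<in>K. card (S k))"
    by (rule card_UN_disjoint[OF _ _ disj]) (auto simp: K_def S_def intro: finite_subset[OF _ finite_syt])
  also have "\<dots> = (\<Sum>k\<in>K. card (syt (subb k la)))" by (rule sum.cong) (auto simp: cardS)
  finally show ?thesis by (simp add: K_def)
qed

lemma syt_Par0: "card (syt (replicate N 0)) = 1"
proof -
  have yc: "young_cells (replicate N 0) = {}" by (auto simp: young_cells_def)
  have "syt (replicate N 0) = {\<lambda>_. 0}"
    by (auto simp: syt_def yc bij_betw_def)
  thus ?thesis by simp
qed


definition beta :: "nat \<Rightarrow> nat list \<Rightarrow> nat \<Rightarrow> nat" where
  "beta N lam i = lam ! (N - 1 - i) + i"

definition DD :: "(nat \<Rightarrow> 'a::comm_ring_1) \<Rightarrow> nat list \<Rightarrow> 'a" where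
  "DD h lam = JTf h (length lam) (beta (length lam) lam)"

lemma beta_addb:
  assumes "length lam = N" "k < N" "i < N"
  shows "beta N (addb k lam) i = ((beta N lam)(N - 1 - k := Suc (beta N lam (N - 1 - k)))) i"
  using assms by (auto simp: beta_def addb_def nth_list_update)

lemma DD_addb_invalid:
  assumes mu: "mu \<in> Par N n" and k: "k < N" and na: "addb k mu \<notin> Par N (Suc n)"
  shows "DD h (addb k mu) = 0"
proof -
  have len: "length mu = N" using mu by (simp add: Par_def)
  have kk: "0 < k" "mu ! (k - 1) = mu ! k" using addb_notPar[OF mu k na] by auto
  have "JTf h N (beta N (addb k mu)) = 0"
  proof (rule JTf_eq_rows[of "N - 1 - k" N "N - k"])
    show "beta N (addb k mu) (N - 1 - k) = beta N (addb k mu) (N - k)"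
      using kk k len by (auto simp: beta_def addb_def nth_list_update)
  qed (use kk k in auto)
  thus ?thesis using len by (simp add: DD_def addb_def)
qed

lemma pieri_DD:
  assumes h0: "h 0 = 1" and mu: "mu \<in> Par N n" and nN: "n < N"
  shows "h 1 * DD h mu = (\<Sum>k<N. DD h (addb k mu))"
proof -
  have len: "length mu = N" using mu by (simp add: Par_def)
  have b0: "beta N mu 0 = 0" using Par_last_zero[OF mu nN] by (simp add: beta_def)
  have "h 1 * DD h mu = (\<Sum>t=0..<N. JTf h N ((beta N mu)(t := Suc (beta N mu t))))"
    unfolding DD_def len by (rule pieri_JTf[of h "beta N mu" N, OF h0 b0]) (use nN in simp)
  also have "\<dots> = (\<Sum>t<N. JTf h N ((beta N mu)(t := Suc (beta N mu t))))"
    by (simp add: atLeast0LessThan)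
  also have "\<dots> = (\<Sum>k<N. JTf h N ((beta N mu)(N - Suc k := Suc (beta N mu (N - Suc k)))))"
    by (rule sum.nat_diff_reindex[symmetric])
  also have "\<dots> = (\<Sum>k<N. DD h (addb k mu))"
  proof (rule sum.cong[OF refl])
    fix k assume k: "k \<in> {..<N}"
    have "JTf h N ((beta N mu)(N - Suc k := Suc (beta N mu (N - Suc k)))) = JTf h N (beta N (addb k mu))"
      by (rule JTf_cong) (use beta_addb[OF len, of k] k in auto)
    thus "JTf h N ((beta N mu)(N - Suc k := Suc (beta N mu (N - Suc k)))) = DD h (addb k mu)"
      using len by (simp add: DD_def addb_def)
  qed
  finally show ?thesis .
qed

lemma main_Par:
  fixes h :: "nat \<Rightarrow> 'a::comm_ring_1"
  assumes h0: "h 0 = 1"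
  shows "n \<le> N \<Longrightarrow> (\<Sum>la\<in>Par N n. of_nat (card (syt la)) * DD h la) = h 1 ^ n"
proof (induction n)
  case 0
  have "DD h (replicate N 0) = 1"
  proof -
    have "JTf h N (beta N (replicate N 0)) = JTf h N (\<lambda>i. i)"
      by (rule JTf_cong) (simp add: beta_def)
    thus ?thesis using JTf_id[of h N, OF h0] by (simp add: DD_def)
  qed
  thus ?case by (simp add: Par_0 syt_Par0)
next
  case (Suc n)
  hence nN: "n < N" by simp
  let ?F = "\<lambda>la. (of_nat (card (syt la)) :: 'a)"
  have "h 1 ^ Suc n = h 1 * (\<Sum>mu\<in>Par N n. ?F mu * DD h mu)" using Suc by simp
  also have "\<dots> = (\<Sum>mu\<in>Par N n. ?F mu * (h 1 * DD h mu))"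
    by (simp add: sum_distrib_left algebra_simps)
  also have "\<dots> = (\<Sum>mu\<in>Par N n. \<Sum>k<N. if addb k mu \<in> Par N (Suc n) then ?F mu * DD h (addb k mu) else 0)"
  proof (rule sum.cong[OF refl])
    fix mu assume mu: "mu \<in> Par N n"
    have "?F mu * (h 1 * DD h mu) = (\<Sum>k<N. ?F mu * DD h (addb k mu))"
      unfolding pieri_DD[of h, OF h0 mu nN] by (simp add: sum_distrib_left)
    also have "\<dots> = (\<Sum>k<N. if addb k mu \<in> Par N (Suc n) then ?F mu * DD h (addb k mu) else 0)"
      by (rule sum.cong[OF refl]) (use DD_addb_invalid[OF mu, where h=h] in auto)
    finally show "?F mu * (h 1 * DD h mu) = \<dots>" .
  qed
  also have "\<dots> = (\<Sum>k<N. \<Sum>mu\<in>Par N n. if addb k mu \<in> Par N (Suc n) then ?F mu * DD h (addb k mu) else 0)"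
    by (rule sum.swap)
  also have "\<dots> = (\<Sum>k<N. \<Sum>la\<in>Par N (Suc n). if subb k la \<in> Par N n then ?F (subb k la) * DD h la else 0)"
  proof (rule sum.cong[OF refl])
    fix k assume k: "k \<in> {..<N}"
    have bij: "bij_betw (addb k) {mu \<in> Par N n. addb k mu \<in> Par N (Suc n)} {la \<in> Par N (Suc n). subb k la \<in> Par N n}"
    proof (rule bij_betw_byWitness[where f' = "subb k"])
      show "\<forall>a\<in>{mu \<in> Par N n. addb k mu \<in> Par N (Suc n)}. subb k (addb k a) = a"
        using k by (auto simp: Par_def)
      show "\<forall>a\<in>{la \<in> Par N (Suc n). subb k la \<in> Par N n}. addb k (subb k a) = a"
        using k subb_Par_pos by (auto simp: Par_def intro!: addb_subb)
      show "addb k ` {mu \<in> Par N n. addb k mu \<in> Par N (Suc n)} \<subseteq> {la \<in> Par N (Suc n). subb k la \<in> Par N n}"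
        using k by (auto simp: Par_def)
      show "subb k ` {la \<in> Par N (Suc n). subb k la \<in> Par N n} \<subseteq> {mu \<in> Par N n. addb k mu \<in> Par N (Suc n)}"
      proof
        fix x assume "x \<in> subb k ` {la \<in> Par N (Suc n). subb k la \<in> Par N n}"
        then obtain la where la: "la \<in> Par N (Suc n)" "subb k la \<in> Par N n" and x: "x = subb k la" by auto
        have "addb k x = la" using x subb_Par_pos[OF la(1) _ la(2)] k la(1) by (auto simp: Par_def intro!: addb_subb)
        thus "x \<in> {mu \<in> Par N n. addb k mu \<in> Par N (Suc n)}" using la x by simp
      qed
    qed
    have "(\<Sum>mu\<in>Par N n. if addb k mu \<in> Par N (Suc n) then ?F mu * DD h (addb k mu) else 0)
        = (\<Sum>mu\<in>{mu \<in> Par N n. addb k mu \<in> Par N (Suc n)}. ?F mu * DD h (addb k mu))"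
      by (simp add: sum.inter_filter[OF finite_Par])
    also have "\<dots> = (\<Sum>mu\<in>{mu \<in> Par N n. addb k mu \<in> Par N (Suc n)}. ?F (subb k (addb k mu)) * DD h (addb k mu))"
      by (rule sum.cong[OF refl]) (use k in \<open>auto simp: Par_def\<close>)
    also have "\<dots> = (\<Sum>la\<in>{la \<in> Par N (Suc n). subb k la \<in> Par N n}. ?F (subb k la) * DD h la)"
      by (rule sum.reindex_bij_betw[OF bij])
    also have "\<dots> = (\<Sum>la\<in>Par N (Suc n). if subb k la \<in> Par N n then ?F (subb k la) * DD h la else 0)"
      by (simp add: sum.inter_filter[OF finite_Par])
    finally show "(\<Sum>mu\<in>Par N n. if addb k mu \<in> Par N (Suc n) then ?F mu * DD h (addb k mu) else 0) = \<dots>" .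
  qed
  also have "\<dots> = (\<Sum>la\<in>Par N (Suc n). \<Sum>k<N. if subb k la \<in> Par N n then ?F (subb k la) * DD h la else 0)"
    by (rule sum.swap)
  also have "\<dots> = (\<Sum>la\<in>Par N (Suc n). ?F la * DD h la)"
  proof (rule sum.cong[OF refl])
    fix la assume la: "la \<in> Par N (Suc n)"
    have "(\<Sum>k<N. if subb k la \<in> Par N n then ?F (subb k la) * DD h la else 0)
        = (\<Sum>k\<in>{k. k < N \<and> subb k la \<in> Par N n}. ?F (subb k la)) * DD h la"
    proof -
      have "(\<Sum>k<N. if subb k la \<in> Par N n then ?F (subb k la) * DD h la else 0)
          = (\<Sum>k\<in>{k \<in> {..<N}. subb k la \<in> Par N n}. ?F (subb k la) * DD h la)"
        by (rule sum.inter_filter[symmetric]) simp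
      also have "{k \<in> {..<N}. subb k la \<in> Par N n} = {k. k < N \<and> subb k la \<in> Par N n}" by auto
      finally show ?thesis by (simp add: sum_distrib_right)
    qed
    also have "(\<Sum>k\<in>{k. k < N \<and> subb k la \<in> Par N n}. ?F (subb k la)) = ?F la"
      by (simp add: syt_rec[OF la])
    finally show "(\<Sum>k<N. if subb k la \<in> Par N n then ?F (subb k la) * DD h la else 0) = ?F la * DD h la" .
  qed
  finally show ?case by simp
qed


definition ee :: "nat \<Rightarrow> 'a::field_char_0" where
  "ee k = 1 / fact k"

lemma ee_0[simp]: "ee 0 = 1" by (simp add: ee_def)

lemma hh_ee_step:
  "(of_nat m - of_nat j) * hh (ee :: nat \<Rightarrow> 'a::field_char_0) m j = (if m = 0 then 0 else hh ee (m - 1) j)"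
proof (cases "m = 0")
  case True thus ?thesis by (simp add: hh_def)
next
  case False
  show ?thesis
  proof (cases "j < m")
    case True
    obtain d where d: "m - j = Suc d" using True by (cases "m - j") auto
    have "(of_nat m - of_nat j) * hh (ee :: nat \<Rightarrow> 'a) m j = of_nat (Suc d) / fact (Suc d)"
      using True d by (simp add: hh_def ee_def of_nat_diff[symmetric])
    also have "\<dots> = 1 / fact d" by (simp add: fact_Suc field_simps del: of_nat_Suc)
    also have "\<dots> = hh ee (m - 1) j"
    proof -
      have md: "m - Suc j = d" using d by simp
      have "j \<le> m - 1" using True by simp
      thus ?thesis by (simp add: hh_def ee_def md)
    qed
    finally show ?thesis using False by simp
  next
    case False
    thus ?thesis using \<open>m \<noteq> 0\<close> by (auto simp: hh_def)
  qed
qed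

lemma exp_rec_JTf:
  "(of_nat (\<Sum>i<N. b i) - of_nat (\<Sum>j<N. j)) * JTf (ee :: nat \<Rightarrow> 'a::field_char_0) N b
   = (\<Sum>t<N. if b t = 0 then 0 else JTf ee N (b(t := b t - 1)))"
proof -
  have "(of_nat (\<Sum>i<N. b i) - of_nat (\<Sum>j<N. j)) * JTf (ee :: nat \<Rightarrow> 'a) N b
      = ((\<Sum>i=0..<N. of_nat (b i)) - (\<Sum>j=0..<N. of_nat j)) * det (mat N N (\<lambda>(i,j). hh ee (b i) j))"
    by (simp add: JTf_def atLeast0LessThan)
  also have "\<dots> = (\<Sum>t=0..<N. det (mat N N (\<lambda>(i,j). if i = t then (of_nat (b i) - of_nat j) * hh ee (b i) j else hh ee (b i) j)))"
  proof -
    have rs: "(\<Sum>t=0..<N. det (mat N N (\<lambda>(i,j). if i = t then (of_nat (b i) - of_nat j) * hh (ee :: nat \<Rightarrow> 'a) (b i) j else hh ee (b i) j)))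
       = ((\<Sum>i=0..<N. of_nat (b i)) - (\<Sum>j=0..<N. of_nat j)) * det (mat N N (\<lambda>(i,j). hh ee (b i) j))"
      using row_scaled_replace[of N "\<lambda>i. of_nat (b i)" "\<lambda>j. of_nat j" "\<lambda>(i,j). hh (ee :: nat \<Rightarrow> 'a) (b i) j"]
      by (simp only: case_prod_conv)
    show ?thesis by (rule rs[symmetric])
  qed
  also have "\<dots> = (\<Sum>t=0..<N. if b t = 0 then 0 else JTf ee N (b(t := b t - 1)))"
  proof (rule sum.cong[OF refl])
    fix t assume t: "t \<in> {0..<N}"
    have eq: "mat N N (\<lambda>(i,j). if i = t then (of_nat (b i) - of_nat j) * hh (ee :: nat \<Rightarrow> 'a) (b i) j else hh ee (b i) j)
        = mat N N (\<lambda>(i,j). if i = t then (if b t = 0 then 0 else hh ee (b t - 1) j) else hh ee (b i) j)"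
      by (rule eq_matI) (auto simp: hh_ee_step)
    show "det (mat N N (\<lambda>(i,j). if i = t then (of_nat (b i) - of_nat j) * hh (ee :: nat \<Rightarrow> 'a) (b i) j else hh ee (b i) j))
        = (if b t = 0 then 0 else JTf ee N (b(t := b t - 1)))"
    proof (cases "b t = 0")
      case True
      show ?thesis unfolding eq using True t
        by (simp, intro JTf_zero_row[of t N]) auto
    next
      case False
      have "mat N N (\<lambda>(i,j). if i = t then (if b t = 0 then 0 else hh (ee :: nat \<Rightarrow> 'a) (b t - 1) j) else hh ee (b i) j)
          = mat N N (\<lambda>(i,j). hh ee ((b(t := b t - 1)) i) j)"
        using False by (intro eq_matI) auto
      thus ?thesis unfolding eq JTf_def using False by simp
    qed
  qed
  finally show ?thesis by (simp add: atLeast0LessThan)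
qed

lemma sum_beta:
  assumes "length la = N"
  shows "(\<Sum>i<N. beta N la i) = sum_list la + (\<Sum>j<N. j)"
proof -
  have "(\<Sum>i<N. beta N la i) = (\<Sum>i<N. la ! (N - Suc i)) + (\<Sum>j<N. j)"
    by (simp add: beta_def sum.distrib)
  also have "(\<Sum>i<N. la ! (N - Suc i)) = (\<Sum>i<N. la ! i)" by (rule sum.nat_diff_reindex)
  also have "\<dots> = sum_list la" using assms by (simp add: sum_list_sum_nth atLeast0LessThan)
  finally show ?thesis .
qed

lemma exp_term:
  assumes la: "la \<in> Par N (Suc n)" and k: "k < N"
  shows "(if beta N la (N - Suc k) = 0 then 0 else JTf (ee :: nat \<Rightarrow> 'a::field_char_0) N ((beta N la)(N - Suc k := beta N la (N - Suc k) - 1)))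
       = (if subb k la \<in> Par N n then JTf ee N (beta N (subb k la)) else 0)"
proof -
  let ?b = "beta N la" and ?t = "N - Suc k"
  have len: "length la = N" using la by (simp add: Par_def)
  have tk: "N - 1 - ?t = k" using k by simp
  show ?thesis
  proof (cases "0 < la ! k")
    case True
    hence bt: "?b ?t \<noteq> 0" using tk by (simp add: beta_def)
    have agree: "JTf (ee :: nat \<Rightarrow> 'a) N (?b(?t := ?b ?t - 1)) = JTf ee N (beta N (subb k la))"
      by (rule JTf_cong) (use k len tk True in \<open>auto simp: beta_def subb_def nth_list_update\<close>)
    show ?thesis
    proof (cases "subb k la \<in> Par N n")
      case True thus ?thesis using bt agree by simp
    next
      case False
      have sk: "Suc k < N" "la ! Suc k = la ! k"
        using subb_notPar[OF la k \<open>0 < la ! k\<close>] False by auto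
      have "JTf (ee :: nat \<Rightarrow> 'a) N (?b(?t := ?b ?t - 1)) = 0"
        by (rule JTf_eq_rows[of ?t N "?t - 1"]) (use sk k True in \<open>auto simp: beta_def Suc_diff_Suc\<close>)
      thus ?thesis using False bt by simp
    qed
  next
    case False
    hence z: "la ! k = 0" by simp
    hence "subb k la = la" by (simp add: subb_def) (metis list_update_id)
    hence ns: "subb k la \<notin> Par N n" using la by (auto simp: Par_def)
    have "JTf (ee :: nat \<Rightarrow> 'a) N (?b(?t := ?b ?t - 1)) = 0" if bt: "?b ?t \<noteq> 0"
    proof -
      have t1: "1 \<le> ?t" using bt z tk by (simp add: beta_def)
      hence sk: "Suc k < N" by simp
      have "la ! Suc k \<le> la ! k" using la sk by (intro dec_nth) (auto simp: Par_def)
      hence z2: "la ! Suc k = 0" using z by simp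
      show ?thesis
        by (rule JTf_eq_rows[of ?t N "?t - 1"]) (use sk k z z2 t1 in \<open>auto simp: beta_def Suc_diff_Suc\<close>)
    qed
    thus ?thesis using ns by auto
  qed
qed

lemma F_formula:
  "la \<in> Par N n \<Longrightarrow> (of_nat (card (syt la)) :: 'a::field_char_0) = fact n * JTf ee N (beta N la)"
proof (induction n arbitrary: la)
  case 0
  hence la: "la = replicate N 0" by (simp add: Par_0)
  have "JTf (ee :: nat \<Rightarrow> 'a) N (beta N la) = JTf ee N (\<lambda>i. i)"
    by (rule JTf_cong) (simp add: beta_def la)
  also have "\<dots> = 1" by (rule JTf_id) simp
  finally show ?case by (simp add: la syt_Par0)
next
  case (Suc n)
  note la = Suc.prems
  have len: "length la = N" and sm: "sum_list la = Suc n" using la by (auto simp: Par_def)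
  let ?c = "\<lambda>mu. JTf (ee :: nat \<Rightarrow> 'a) N (beta N mu)"
  let ?K = "{k. k < N \<and> subb k la \<in> Par N n}"
  have "of_nat (Suc n) * ?c la = (of_nat (\<Sum>i<N. beta N la i) - of_nat (\<Sum>j<N. j)) * ?c la"
    using sum_beta[OF len] sm by simp
  also have "\<dots> = (\<Sum>t<N. if beta N la t = 0 then 0 else JTf ee N ((beta N la)(t := beta N la t - 1)))"
    by (rule exp_rec_JTf)
  also have "\<dots> = (\<Sum>k<N. if beta N la (N - Suc k) = 0 then 0 else JTf ee N ((beta N la)(N - Suc k := beta N la (N - Suc k) - 1)))"
    by (rule sum.nat_diff_reindex[symmetric])
  also have "\<dots> = (\<Sum>k<N. if subb k la \<in> Par N n then ?c (subb k la) else 0)"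
    by (rule sum.cong[OF refl], rule exp_term[OF la]) simp
  also have "\<dots> = (\<Sum>k\<in>?K. ?c (subb k la))"
  proof -
    have "(\<Sum>k<N. if subb k la \<in> Par N n then ?c (subb k la) else 0) = (\<Sum>k\<in>{k \<in> {..<N}. subb k la \<in> Par N n}. ?c (subb k la))"
      by (rule sum.inter_filter[symmetric]) simp
    also have "{k \<in> {..<N}. subb k la \<in> Par N n} = ?K" by auto
    finally show ?thesis .
  qed
  finally have rec: "of_nat (Suc n) * ?c la = (\<Sum>k\<in>?K. ?c (subb k la))" .
  have "(of_nat (card (syt la)) :: 'a) = (\<Sum>k\<in>?K. of_nat (card (syt (subb k la))))"
    by (simp add: syt_rec[OF la])
  also have "\<dots> = (\<Sum>k\<in>?K. fact n * ?c (subb k la))"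
    by (rule sum.cong[OF refl]) (simp add: Suc.IH)
  also have "\<dots> = fact n * (\<Sum>k\<in>?K. ?c (subb k la))" by (simp add: sum_distrib_left)
  also have "\<dots> = fact n * (of_nat (Suc n) * ?c la)" by (simp only: rec)
  also have "\<dots> = fact (Suc n) * ?c la" by (simp add: fact_Suc algebra_simps del: of_nat_Suc)
  finally show ?case .
qed


lemma fact_ffr:
  "j \<le> m \<Longrightarrow> (of_nat (fact m) :: 'a::comm_ring_1) = ffr (of_nat m) j * of_nat (fact (m - j))"
proof (induction j)
  case 0 thus ?case by simp
next
  case (Suc j)
  hence jm: "j < m" by simp
  have e: "m - j = Suc (m - Suc j)" using jm by simp
  have f: "fact (m - j) = (m - j) * fact (m - Suc j)"
    unfolding e by (simp only: fact_Suc of_nat_id)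
  have d: "(of_nat (m - j) :: 'a) = of_nat m - of_nat j" using jm by (intro of_nat_diff) simp
  have "(of_nat (fact m) :: 'a) = ffr (of_nat m) j * of_nat (fact (m - j))" using Suc by simp
  also have "(of_nat (fact (m - j)) :: 'a) = of_nat (m - j) * of_nat (fact (m - Suc j))"
    unfolding f by (rule of_nat_mult)
  also have "ffr (of_nat m) j * (of_nat (m - j) * of_nat (fact (m - Suc j))) = ffr (of_nat m) (Suc j) * (of_nat (fact (m - Suc j)) :: 'a)"
    unfolding d ffr_Suc by (simp only: mult_ac)
  finally show ?case .
qed

lemma ffr_zero: "m < j \<Longrightarrow> ffr (of_nat m :: 'a::comm_ring_1) j = 0"
  unfolding ffr_def by (rule prod_zero) auto

lemma hh_ee_ffr: "hh (ee :: nat \<Rightarrow> 'a::field_char_0) m j = (1 / fact m) * ffr (of_nat m) j"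
proof (cases "j \<le> m")
  case True
  have fm: "(fact m :: 'a) = ffr (of_nat m) j * fact (m - j)"
    using fact_ffr[OF True, where 'a='a] by (simp only: of_nat_fact)
  have nz: "ffr (of_nat m) j \<noteq> (0::'a)"
  proof
    assume "ffr (of_nat m) j = (0::'a)"
    hence "(fact m :: 'a) = 0" using fm by simp
    thus False by simp
  qed
  have "(1 / fact m) * ffr (of_nat m) j = ffr (of_nat m) j / (ffr (of_nat m) j * (fact (m - j) :: 'a))"
    by (subst fm) simp
  also have "\<dots> = 1 / fact (m - j)" using nz by simp
  also have "\<dots> = hh ee m j" using True by (simp add: hh_def ee_def)
  finally show ?thesis by simp
qed (simp add: hh_def ffr_zero)

lemma c_formula:
  "JTf (ee :: nat \<Rightarrow> 'a::field_char_0) N b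
   = (\<Prod>i=0..<N. 1 / fact (b i)) * (\<Prod>(i,k)\<in>vpairs N. of_nat (b k) - of_nat (b i))"
proof -
  have "JTf (ee :: nat \<Rightarrow> 'a) N b = det (mat N N (\<lambda>(i,j). (1 / fact (b i)) * ffr (of_nat (b i)) j))"
    unfolding JTf_def hh_ee_ffr ..
  also have "\<dots> = (\<Prod>i=0..<N. 1 / fact (b i)) * det (mat N N (\<lambda>(i,j). ffr (of_nat (b i) :: 'a) j))"
    using det_rowscale[of N "\<lambda>i. 1 / fact (b i)" "\<lambda>(i,j). ffr (of_nat (b i) :: 'a) j"]
    by (simp only: case_prod_conv)
  also have "det (mat N N (\<lambda>(i,j). ffr (of_nat (b i) :: 'a) j)) = (\<Prod>(i,k)\<in>vpairs N. of_nat (b k) - of_nat (b i))"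
    by (rule vdm_ffr)
  finally show ?thesis .
qed

definition BB :: "(nat \<Rightarrow> 'a::field_char_0 poly) \<Rightarrow> nat \<Rightarrow> 'a poly" where
  "BB A k = smult (1 / fact k) (A k)"

lemma pderiv_BB:
  assumes ap: "appell A"
  shows "pderiv (BB A p) = (if p = 0 then 0 else BB A (p - 1))"
proof (cases p)
  case 0
  have "A 0 = 1" using ap by (simp add: appell_def)
  thus ?thesis using 0 by (simp add: BB_def pderiv_smult)
next
  case (Suc q)
  have "pderiv (A p) = smult (of_nat p) (A (p - 1))" using ap Suc by (simp add: appell_def)
  hence "pderiv (BB A p) = smult (of_nat (Suc q) / fact (Suc q)) (A q)" using Suc by (simp add: BB_def pderiv_smult)
  also have "of_nat (Suc q) / fact (Suc q) = (1 / fact q :: 'a)"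
    by (simp add: fact_Suc field_simps del: of_nat_Suc)
  finally show ?thesis using Suc by (simp add: BB_def)
qed

lemma pderiv_hhBB:
  assumes ap: "appell A"
  shows "pderiv (hh (BB A) m j) = hh (BB A) m (Suc j)"
  using pderiv_BB[OF ap, of "m - j"] by (auto simp: hh_def Suc_diff_Suc)

lemma funpow_pderiv_appell:
  assumes ap: "appell A"
  shows "(pderiv ^^ j) (A m) = smult (of_nat (fact m)) (hh (BB A) m j)"
proof (induction j)
  case 0 thus ?case by (simp add: hh_def BB_def)
next
  case (Suc j)
  thus ?case by (simp add: pderiv_smult pderiv_hhBB[OF ap])
qed

lemma prod_const_poly: "(\<Prod>i\<in>S. [:f i:]) = [:\<Prod>i\<in>S. f i:]"
  by (induction S rule: infinite_finite_induct) (auto simp: mult_ac)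

lemma wronskian_eq:
  assumes ap: "appell A"
  shows "wronskian (map A ns) = smult (\<Prod>i=0..<length ns. of_nat (fact (ns ! i))) (JTf (BB A) (length ns) (\<lambda>i. ns ! i))"
proof -
  let ?r = "length ns"
  let ?M = "mat ?r ?r (\<lambda>(i,j). (pderiv ^^ i) (map A ns ! j))"
  have "wronskian (map A ns) = det ?M" by (simp add: wronskian_def)
  also have "\<dots> = det (transpose_mat ?M)" using det_transpose[of ?M ?r] by simp
  also have "transpose_mat ?M = mat ?r ?r (\<lambda>(i,j). [:of_nat (fact (ns ! i)):] * hh (BB A) (ns ! i) j)"
    by (rule eq_matI) (auto simp: funpow_pderiv_appell[OF ap])
  also have "det \<dots> = (\<Prod>i=0..<?r. [:of_nat (fact (ns ! i)):]) * det (mat ?r ?r (\<lambda>(i,j). hh (BB A) (ns ! i) j))"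
    using det_rowscale[of ?r "\<lambda>i. [:of_nat (fact (ns ! i)):]" "\<lambda>(i,j). hh (BB A) (ns ! i) j"]
    by (simp only: case_prod_conv)
  finally have w: "wronskian (map A ns) = (\<Prod>i=0..<?r. [:of_nat (fact (ns ! i)):]) * det (mat ?r ?r (\<lambda>(i,j). hh (BB A) (ns ! i) j))" .
  have sm: "\<And>c p. [:c:] * p = smult c (p :: 'a poly)" by simp
  show ?thesis unfolding w prod_const_poly JTf_def sm ..
qed

lemma vandermonde_eq:
  "(of_int (vandermonde xs) :: 'a::comm_ring_1) = (\<Prod>(i,k)\<in>vpairs (length xs). of_nat (xs ! k) - of_nat (xs ! i))"
  unfolding vandermonde_def vpairs_def of_int_prod by (rule prod.cong) auto


definition pad :: "nat \<Rightarrow> nat list \<Rightarrow> nat list" where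
  "pad N lam = lam @ replicate (N - length lam) 0"

lemma young_cells_app0: "young_cells (lam @ replicate k 0) = young_cells lam"
  by (auto simp: young_cells_def nth_append nth_replicate split: if_splits)

lemma syt_app0: "syt (lam @ replicate k 0) = syt lam"
  unfolding syt_def young_cells_app0 by (simp add: sum_list_replicate)

lemma DD_snoc0:
  assumes h0: "h 0 = 1"
  shows "DD h (xs @ [0]) = DD h xs"
proof -
  let ?N = "length xs"
  have "JTf h (Suc ?N) (beta (Suc ?N) (xs @ [0])) = JTf h ?N (beta ?N xs)"
  proof (rule JTf_shift[of h, OF h0])
    show "beta (Suc ?N) (xs @ [0]) 0 = 0" by (simp add: beta_def nth_append)
    fix i assume i: "i < ?N"
    show "beta (Suc ?N) (xs @ [0]) (Suc i) = Suc (beta ?N xs i)"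
      using i by (simp add: beta_def nth_append)
  qed
  thus ?thesis by (simp add: DD_def)
qed

lemma DD_app0:
  assumes h0: "h 0 = 1"
  shows "DD h (lam @ replicate k 0) = DD h lam"
proof (induction k)
  case (Suc k)
  have "lam @ replicate (Suc k) 0 = (lam @ replicate k 0) @ [0]" by (simp add: replicate_append_same[symmetric])
  thus ?case using Suc DD_snoc0[of h, OF h0, of "lam @ replicate k 0"] by simp
qed simp

lemma len_le_sum: "\<forall>x\<in>set xs. 0 < x \<Longrightarrow> length xs \<le> sum_list (xs :: nat list)"
  by (induction xs) auto

lemma sum_filter_pos: "sum_list (filter (\<lambda>x. 0 < x) xs) = sum_list (xs :: nat list)"
  by (induction xs) auto

lemma dec_split:
  "sorted_wrt (\<ge>) (xs :: nat list) \<Longrightarrow>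
   xs = filter (\<lambda>x. 0 < x) xs @ replicate (length xs - length (filter (\<lambda>x. 0 < x) xs)) 0"
proof (induction xs)
  case (Cons x xs)
  show ?case
  proof (cases "0 < x")
    case True
    have "length (filter (\<lambda>x. 0 < x) xs) \<le> length xs" by simp
    thus ?thesis using Cons True by (simp add: Suc_diff_le)
  next
    case False
    hence "\<forall>y\<in>set xs. y = 0" using Cons.prems by auto
    hence "filter (\<lambda>x. 0 < x) xs = []" "xs = replicate (length xs) 0"
      by (auto simp: filter_empty_conv intro: replicate_length_same[symmetric])
    thus ?thesis using False by simp
  qed
qed simp

lemma pad_bij:
  assumes nN: "n \<le> N"
  shows "bij_betw (pad N) (partitions n) (Par N n)"
proof (rule bij_betw_byWitness[where f' = "filter (\<lambda>x. 0 < x)"])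
  show "\<forall>lam\<in>partitions n. filter (\<lambda>x. 0 < x) (pad N lam) = lam"
  proof
    fix lam assume "lam \<in> partitions n"
    hence pos: "\<forall>x\<in>set lam. 0 < x" by (simp add: partitions_def is_partition_def)
    hence "filter (\<lambda>x. 0 < x) lam = lam" by (simp add: filter_id_conv)
    thus "filter (\<lambda>x. 0 < x) (pad N lam) = lam" by (simp add: pad_def)
  qed
  show "\<forall>la\<in>Par N n. pad N (filter (\<lambda>x. 0 < x) la) = la"
  proof
    fix la assume "la \<in> Par N n"
    hence "sorted_wrt (\<ge>) la" "length la = N" by (auto simp: Par_def)
    thus "pad N (filter (\<lambda>x. 0 < x) la) = la" using dec_split[of la] by (simp add: pad_def)
  qed
  show "pad N ` partitions n \<subseteq> Par N n"
  proof
    fix x assume "x \<in> pad N ` partitions n"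
    then obtain lam where lam: "lam \<in> partitions n" and x: "x = pad N lam" by auto
    have pos: "\<forall>x\<in>set lam. 0 < x" and s: "sorted_wrt (\<ge>) lam" and sm: "sum_list lam = n"
      using lam by (auto simp: partitions_def is_partition_def)
    have len: "length lam \<le> N" using len_le_sum[OF pos] sm nN by simp
    have "sorted_wrt (\<ge>) (pad N lam)"
      unfolding pad_def sorted_wrt_append using s
      by (auto simp: sorted_wrt_iff_nth_less)
    thus "x \<in> Par N n" using len sm by (simp add: x Par_def pad_def)
  qed
  show "filter (\<lambda>x. 0 < x) ` Par N n \<subseteq> partitions n"
  proof
    fix x assume "x \<in> filter (\<lambda>x. 0 < x) ` Par N n"
    then obtain la where la: "la \<in> Par N n" and x: "x = filter (\<lambda>x. 0 < x) la" by auto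
    have "sorted_wrt (\<ge>) la" "sum_list la = n" using la by (auto simp: Par_def)
    thus "x \<in> partitions n"
      by (auto simp: x partitions_def is_partition_def sorted_wrt_filter sum_filter_pos)
  qed
qed

lemma term_eq:
  fixes A :: "nat \<Rightarrow> 'a::field_char_0 poly"
  assumes ap: "appell A" and lam: "lam \<in> partitions n"
  shows "smult (of_nat (num_syt lam ^ 2) / fact n) (wronskian_appell A lam)
       = smult (of_nat (num_syt lam)) (DD (BB A) lam)"
proof -
  define r where "r = length lam"
  define b where "b = beta r lam"
  have s: "sorted_wrt (\<ge>) lam" and sm: "sum_list lam = n"
    using lam by (auto simp: partitions_def is_partition_def)
  have lamP: "lam \<in> Par r n" using s sm by (simp add: Par_def r_def)
  have ds: "degree_seq lam = map b [0..<r]" by (simp add: degree_seq_def b_def beta_def r_def)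
  have dsl: "length (degree_seq lam) = r" by (simp add: ds)
  have dsn: "i < r \<Longrightarrow> degree_seq lam ! i = b i" for i by (simp add: ds)
  define P :: 'a where "P = (\<Prod>i=0..<r. of_nat (fact (b i)))"
  define Pinv :: 'a where "Pinv = (\<Prod>i=0..<r. 1 / fact (b i))"
  define V :: 'a where "V = (\<Prod>(i,k)\<in>vpairs r. of_nat (b k) - of_nat (b i))"
  define JT where "JT = JTf (BB A) r b"
  have W: "wronskian (map A (degree_seq lam)) = smult P JT"
  proof -
    have "wronskian (map A (degree_seq lam)) = smult (\<Prod>i=0..<r. of_nat (fact (degree_seq lam ! i))) (JTf (BB A) r (\<lambda>i. degree_seq lam ! i))"
      using wronskian_eq[OF ap, of "degree_seq lam"] by (simp add: dsl)
    also have "(\<Prod>i=0..<r. of_nat (fact (degree_seq lam ! i))) = P"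
      unfolding P_def by (rule prod.cong) (auto simp: dsn)
    also have "JTf (BB A) r (\<lambda>i. degree_seq lam ! i) = JT"
      unfolding JT_def by (rule JTf_cong) (simp add: dsn)
    finally show ?thesis .
  qed
  have Vd: "of_int (vandermonde (degree_seq lam)) = V"
  proof -
    have "of_int (vandermonde (degree_seq lam)) = (\<Prod>(i,k)\<in>vpairs r. of_nat (degree_seq lam ! k) - (of_nat (degree_seq lam ! i) :: 'a))"
      using vandermonde_eq[of "degree_seq lam"] by (simp add: dsl)
    also have "\<dots> = V" unfolding V_def by (rule prod.cong) (auto simp: vpairs_def dsn)
    finally show ?thesis .
  qed
  have Fc: "(of_nat (num_syt lam) :: 'a) = fact n * (Pinv * V)"
    using F_formula[OF lamP, where 'a='a] c_formula[of r b, where 'a='a]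
    by (simp add: num_syt_def b_def Pinv_def V_def)
  have Vnz: "V \<noteq> 0"
  proof -
    have "\<forall>(i,k)\<in>vpairs r. (of_nat (b k) - of_nat (b i) :: 'a) \<noteq> 0"
    proof (clarify)
      fix i k assume ik: "(i,k) \<in> vpairs r" and eq: "(of_nat (b k) - of_nat (b i) :: 'a) = 0"
      have ik': "i < k" "k < r" using ik by (auto simp: vpairs_def)
      have "lam ! (r - 1 - i) \<le> lam ! (r - 1 - k)" using s ik' by (intro dec_nth) (auto simp: r_def)
      hence "b i < b k" using ik' by (simp add: b_def beta_def)
      thus False using eq by simp
    qed
    thus ?thesis unfolding V_def by (subst prod_zero_iff) auto
  qed
  have PP: "P * Pinv = 1"
    unfolding P_def Pinv_def prod.distrib[symmetric] by (rule prod.neutral) (simp add: of_nat_fact)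
  have "smult (of_nat (num_syt lam ^ 2) / fact n) (wronskian_appell A lam)
      = smult (of_nat (num_syt lam ^ 2) / fact n * inverse V * P) JT"
    by (simp add: wronskian_appell_def W Vd mult.assoc)
  also have "of_nat (num_syt lam ^ 2) / fact n * inverse V * P = (of_nat (num_syt lam) :: 'a)"
  proof -
    have "of_nat (num_syt lam ^ 2) / fact n * inverse V * P
        = (of_nat (num_syt lam) :: 'a) * ((fact n * (Pinv * V)) / fact n * inverse V * P)"
      by (simp add: Fc[symmetric] power2_eq_square)
    also have "(fact n * (Pinv * V)) / fact n * inverse V * P = (P * Pinv) * (V * inverse V) * (fact n / (fact n :: 'a))"
      by (simp add: field_simps)
    also have "\<dots> = 1" using PP Vnz by simp
    finally show ?thesis by simp
  qed
  finally show ?thesis by (simp add: DD_def JT_def b_def r_def)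
qed

theorem theorem5p2:
  fixes A :: "nat \<Rightarrow> 'a::field_char_0 poly" and n :: nat
  assumes "appell A"
  shows "(\<Sum>lam\<in>partitions n.
            smult (of_nat (num_syt lam ^ 2) / fact n) (wronskian_appell A lam))
         = A 1 ^ n"
proof -
  have B0: "BB A 0 = 1" using assms by (simp add: BB_def appell_def)
  have "(\<Sum>lam\<in>partitions n. smult (of_nat (num_syt lam ^ 2) / fact n) (wronskian_appell A lam))
      = (\<Sum>lam\<in>partitions n. of_nat (card (syt (pad n lam))) * DD (BB A) (pad n lam))"
  proof (rule sum.cong[OF refl])
    fix lam assume lam: "lam \<in> partitions n"
    show "smult (of_nat (num_syt lam ^ 2) / fact n) (wronskian_appell A lam)
        = of_nat (card (syt (pad n lam))) * DD (BB A) (pad n lam)"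
      using term_eq[OF assms lam] by (simp add: pad_def syt_app0 DD_app0[of "BB A", OF B0] of_nat_mult_conv_smult num_syt_def)
  qed
  also have "\<dots> = (\<Sum>la\<in>Par n n. of_nat (card (syt la)) * DD (BB A) la)"
    by (rule sum.reindex_bij_betw[OF pad_bij]) simp
  also have "\<dots> = BB A 1 ^ n" by (rule main_Par[of "BB A", OF B0]) simp
  also have "BB A 1 = A 1" by (simp add: BB_def)
  finally show ?thesis .
qed


end
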